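(* Let $\alpha\in(0,1)$, $T>0$, $\mathcal{A}\in\mathbb{C}^{d\times d}$, $x_0\in\mathbb{C}^d$, $\ell_1,\dots,\ell_d\in\mathbb{C}$, $\delta_1,\dots,\delta_d>0$, and $\vartheta(t)=(\ell_1t^{\delta_1},\dots,\ell_dt^{\delta_d})^\top$. Then $x(t)=\mathcal{E}_\alpha(\mathcal{A}t)x_0+\sum_{j=0}^\infty\mathcal{A}^j\nu_j(t)$, where $$\nu_j(t)=\Big(\ell_k\frac{\prod_{i=2}^{j+2}\Gamma(i-\alpha+\delta_k)}{\Gamma(2-\alpha)^{j+1}\prod_{i=2}^{j+2}\Gamma(i+\delta_k)}t^{j+1+\delta_k}\Big)_{k=1,\dots,d}^\top,$$ satisfies $x(0)=x_0$ and ${}^LD^\alpha x(t)=\mathcal{A}x(t)+\vartheta(t)$ for every $t\in(0,T]$.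
   Context: $\mathcal{E}_\alpha(s)=\sum_{n=0}^\infty\frac{s^n}{\Gamma(2-\alpha)^n\prod_{j=1}^n\frac{\Gamma(j+1)}{\Gamma(j+1-\alpha)}}$ (matrix arguments allowed). Caputo derivative ${}^CD^\alpha x(t)=\frac{1}{\Gamma(1-\alpha)}\int_0^t (t-\tau)^{-\alpha}x'(\tau)d\tau$; L-fractional derivative ${}^LD^\alpha x(t)=\frac{\Gamma(2-\alpha)}{t^{1-\alpha}}{}^CD^\alpha x(t)$ (componentwise). *)

theory Defs
  imports "HOL-Analysis.Analysis"
begin

primrec matpow :: "'a::semiring_1 ^'n^'n \<Rightarrow> nat \<Rightarrow> 'a^'n^'n" where
  "matpow M 0 = mat 1"
| "matpow M (Suc k) = M ** matpow M k"

definition mittag_coeff :: "real \<Rightarrow> nat \<Rightarrow> real" where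
  "mittag_coeff \<alpha> n = Gamma (2 - \<alpha>) ^ n * (\<Prod>j=1..n. Gamma (real j + 1) / Gamma (real j + 1 - \<alpha>))"

definition mittag_mat :: "real \<Rightarrow> complex^'d^'d \<Rightarrow> complex^'d^'d" where
  "mittag_mat \<alpha> M = (\<Sum>n. (1 / mittag_coeff \<alpha> n) *\<^sub>R matpow M n)"

definition caputo :: "real \<Rightarrow> (real \<Rightarrow> complex^'d) \<Rightarrow> real \<Rightarrow> complex^'d" where
  "caputo \<alpha> x t = (1 / Gamma (1 - \<alpha>)) *\<^sub>R
     integral {0..t} (\<lambda>\<tau>. ((t - \<tau>) powr (- \<alpha>)) *\<^sub>R vector_derivative x (at \<tau>))"

definition L_deriv :: "real \<Rightarrow> (real \<Rightarrow> complex^'d) \<Rightarrow> real \<Rightarrow> complex^'d" where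
  "L_deriv \<alpha> x t = (Gamma (2 - \<alpha>) / t powr (1 - \<alpha>)) *\<^sub>R caputo \<alpha> x t"

end

theory Submission
  imports Defs "HOL-Real_Asymp.Real_Asymp"
begin


lemma Gamma_plus1_pos: "(x::real) > 0 \<Longrightarrow> Gamma (x + 1) = x * Gamma x"
  by (rule Gamma_plus1) (auto dest: nonpos_Ints_nonpos)

lemma Gamma_ratio_bound:
  fixes x a :: real
  assumes x: "x > 1" and a: "0 \<le> a" "a \<le> 1"
  shows "Gamma (x - a) / Gamma x \<le> (x - 1) powr (- a)"
proof -
  have cv: "convex_on {0<..} (ln \<circ> Gamma :: real \<Rightarrow> real)" by (rule log_convex_Gamma_real)
  have "(ln \<circ> Gamma) ((1 - (1 - a)) *\<^sub>R (x - 1) + (1 - a) *\<^sub>R x)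
      \<le> (1 - (1 - a)) * (ln \<circ> Gamma) (x - 1) + (1 - a) * (ln \<circ> Gamma) x"
    using a x by (intro convex_onD[OF cv]) auto
  moreover have "(1 - (1 - a)) *\<^sub>R (x - 1) + (1 - a) *\<^sub>R x = x - a" by (simp add: algebra_simps)
  moreover have "Gamma x = (x - 1) * Gamma (x - 1)"
    using Gamma_plus1_pos[of "x - 1"] x by simp
  ultimately have le: "ln (Gamma (x - a)) \<le> a * ln (Gamma (x - 1)) + (1 - a) * ln (Gamma x)"
    by simp
  have g1: "Gamma (x - 1) > 0" "Gamma x > 0" "Gamma (x - a) > 0"
  proof -
    show "Gamma (x - 1) > 0" by (rule Gamma_real_pos) (use x in simp)
    show "Gamma x > 0" by (rule Gamma_real_pos) (use x in simp)
    show "Gamma (x - a) > 0" by (rule Gamma_real_pos) (use x a in simp)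
  qed
  have "ln (Gamma x) = ln (x - 1) + ln (Gamma (x - 1))"
    unfolding \<open>Gamma x = (x - 1) * Gamma (x - 1)\<close> using g1 x by (intro ln_mult_pos) auto
  with le have "ln (Gamma (x - a)) \<le> ln (Gamma x) - a * ln (x - 1)" by (simp add: algebra_simps)
  hence "Gamma (x - a) \<le> exp (ln (Gamma x) - a * ln (x - 1))"
    using g1 by (metis exp_le_cancel_iff exp_ln)
  also have "\<dots> = Gamma x * (x - 1) powr (- a)"
    using g1 x by (simp add: exp_diff powr_def exp_minus divide_inverse mult.commute)
  finally show ?thesis using g1 by (simp add: divide_simps mult.commute)
qed

lemma Gamma_ratio_lim:
  fixes a c :: real
  assumes "0 < a" "a \<le> 1" "c > 1"
  shows "(\<lambda>n. Gamma (real n + c - a) / Gamma (real n + c)) \<longlonglongrightarrow> 0"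
proof (rule tendsto_sandwich[of "\<lambda>_. 0" _ _ "\<lambda>n. (real n + c - 1) powr (- a)"])
  show "\<forall>\<^sub>F n in sequentially. 0 \<le> Gamma (real n + c - a) / Gamma (real n + c)"
    using assms by (auto intro!: always_eventually divide_nonneg_nonneg less_imp_le[OF Gamma_real_pos])
  show "\<forall>\<^sub>F n in sequentially. Gamma (real n + c - a) / Gamma (real n + c) \<le> (real n + c - 1) powr (- a)"
    using assms by (auto intro!: always_eventually Gamma_ratio_bound[of "real n + c" a for n, simplified])
  show "(\<lambda>n. (real n + c - 1) powr (- a)) \<longlonglongrightarrow> 0"
    using assms by real_asymp
qed simp

lemma summable_ratio0:
  fixes a :: "nat \<Rightarrow> real"
  assumes nz: "\<And>n. a n \<noteq> 0" and lim: "(\<lambda>n. a (Suc n) / a n) \<longlonglongrightarrow> 0" and r: "r \<ge> 0"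
  shows "summable (\<lambda>n. \<bar>a n\<bar> * r ^ n)"
proof -
  have "\<forall>\<^sub>F n in sequentially. \<bar>a (Suc n) / a n\<bar> < 1 / (2 * (r + 1))"
    using lim r by (intro order_tendstoD) (auto simp: tendsto_rabs_zero_iff dest: tendsto_rabs)
  then obtain N where N: "\<And>n. n \<ge> N \<Longrightarrow> \<bar>a (Suc n) / a n\<bar> < 1 / (2 * (r + 1))"
    by (auto simp: eventually_sequentially)
  show ?thesis
  proof (rule summable_ratio_test[of "1/2" N])
    fix n assume n: "N \<le> n"
    have "\<bar>a (Suc n)\<bar> \<le> \<bar>a n\<bar> / (2 * (r + 1))"
      using N[OF n] nz[of n] r by (simp add: abs_divide divide_simps)
    hence "\<bar>a (Suc n)\<bar> * r ^ Suc n \<le> \<bar>a n\<bar> / (2 * (r + 1)) * r ^ Suc n"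
      using r by (intro mult_right_mono) auto
    also have "\<dots> = \<bar>a n\<bar> / (2 * (r + 1)) * r * r ^ n" by simp
    also have "\<dots> = (\<bar>a n\<bar> * r ^ n) * (r / (2 * (r + 1)))" by simp
    also have "\<dots> \<le> (\<bar>a n\<bar> * r ^ n) * (1/2)"
      using r by (intro mult_left_mono) (auto simp: divide_simps)
    also have "\<dots> = 1/2 * (\<bar>a n\<bar> * r ^ n)" by simp
    finally show "norm (\<bar>a (Suc n)\<bar> * r ^ Suc n) \<le> 1/2 * norm (\<bar>a n\<bar> * r ^ n)"
      using r by simp
  qed simp
qed



lemma Beta_integral_t:
  fixes p q t :: real
  assumes p: "p > 0" and q: "q > 0" and t: "t > 0"
  shows "((\<lambda>\<tau>. \<tau> powr (p - 1) * (t - \<tau>) powr (q - 1)) has_integral (Beta p q * t powr (p + q - 1))) {0..t}"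
proof -
  let ?g = "\<lambda>s. s powr (p - 1) * (1 - s) powr (q - 1)"
  have "(?g has_integral Beta p q) (cbox 0 1)"
    using has_integral_Beta_real[OF p q] by simp
  from has_integral_affinity[OF this, of "1/t" 0] t
  have "((\<lambda>x. ?g ((1/t) * x)) has_integral t * Beta p q) ((\<lambda>x. t * x) ` cbox 0 1)"
    by simp
  moreover have "(\<lambda>x. t * x) ` cbox 0 1 = {0..t}"
    using t by (auto simp: image_iff intro!: bexI[of _ "x / t" for x] simp: field_simps)
  ultimately have I: "((\<lambda>x. ?g (x / t)) has_integral t * Beta p q) {0..t}" by simp
  have J: "((\<lambda>x. t powr (p + q - 2) * ?g (x / t)) has_integral t powr (p + q - 2) * (t * Beta p q)) {0..t}"
    by (rule has_integral_mult_right[OF I])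
  have c: "t powr (p + q - 2) * (t * Beta p q) = Beta p q * t powr (p + q - 1)"
  proof -
    have "p + q - 1 = (p + q - 2) + 1" by simp
    hence "t powr (p + q - 1) = t powr (p + q - 2) * t powr 1" by (simp only: powr_add)
    thus ?thesis using t by simp
  qed
  have E: "t powr (p + q - 2) * ?g (x / t) = x powr (p - 1) * (t - x) powr (q - 1)"
    if "x \<in> {0..t}" for x
  proof -
    have "1 - x / t = (t - x) / t" using t by (simp add: field_simps)
    hence e1: "?g (x / t) = (x powr (p - 1) / t powr (p - 1)) * ((t - x) powr (q - 1) / t powr (q - 1))"
      using that t by (simp add: powr_divide)
    have e2: "t powr (p + q - 2) = t powr (p - 1) * t powr (q - 1)"
    proof -
      have "p + q - 2 = (p - 1) + (q - 1)" by simp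
      then show ?thesis by (simp only: powr_add)
    qed
    have "t powr (p - 1) > 0" "t powr (q - 1) > 0" using t by auto
    then show ?thesis unfolding e1 e2 by (simp add: field_simps)
  qed
  from J have J2: "((\<lambda>x. t powr (p + q - 2) * ?g (x / t)) has_integral Beta p q * t powr (p + q - 1)) {0..t}"
    by (simp only: c)
  show ?thesis
    by (rule has_integral_spike_finite[of "{}", OF _ _ J2]) (use E in auto)
qed



lemma powr_nat_add: "(\<tau>::real) > 0 \<Longrightarrow> \<tau> powr (real n + c) = \<tau> ^ n * \<tau> powr c"
  by (simp add: powr_add powr_realpow)

lemma powr_nat_add1: "(\<tau>::real) > 0 \<Longrightarrow> \<tau> powr (real n + b - 1) = \<tau> ^ n * \<tau> powr (b - 1)"
  using powr_nat_add[of \<tau> n "b - 1"] by (simp add: algebra_simps)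

lemma nb_le: "(b::real) > 0 \<Longrightarrow> real n + b \<le> (1 + b) * 2 ^ n"
proof -
  assume b: "b > 0"
  have "real n \<le> 2 ^ n"
    using less_exp[of n] by (metis of_nat_le_iff of_nat_numeral of_nat_power less_imp_le)
  moreover have "b \<le> b * 2 ^ n" using b by simp
  moreover have "(1 + b) * 2 ^ n = 2 ^ n + b * (2::real) ^ n" by (simp add: algebra_simps)
  ultimately show ?thesis by linarith
qed

lemma summ_nb:
  fixes a :: "nat \<Rightarrow> real" and w :: "nat \<Rightarrow> 'v::real_normed_vector"
  assumes b: "b > 0" and summ: "\<And>r. r \<ge> 0 \<Longrightarrow> summable (\<lambda>n. \<bar>a n\<bar> * r ^ n * norm (w n))"
    and r: "r \<ge> 0"
  shows "summable (\<lambda>n. \<bar>a n\<bar> * (real n + b) * r ^ n * norm (w n))"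
proof (rule summable_comparison_test'[of "\<lambda>n. (1 + b) * (\<bar>a n\<bar> * (2 * r) ^ n * norm (w n))"])
  show "summable (\<lambda>n. (1 + b) * (\<bar>a n\<bar> * (2 * r) ^ n * norm (w n)))"
    using summ[of "2 * r"] r by (intro summable_mult) auto
  fix n
  have "\<bar>a n\<bar> * (real n + b) * r ^ n * norm (w n) \<le> \<bar>a n\<bar> * ((1 + b) * 2 ^ n) * r ^ n * norm (w n)"
    using nb_le[OF b, of n] r by (intro mult_right_mono mult_left_mono) auto
  also have "\<dots> = (1 + b) * (\<bar>a n\<bar> * (2 * r) ^ n * norm (w n))"
    by (simp add: power_mult_distrib)
  finally show "norm (\<bar>a n\<bar> * (real n + b) * r ^ n * norm (w n)) \<le> \<dots>"
    using b r by simp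
qed

lemma summ_D:
  fixes a :: "nat \<Rightarrow> real" and w :: "nat \<Rightarrow> 'v::real_normed_vector"
  assumes b: "b > 0" and summ: "\<And>r. r \<ge> 0 \<Longrightarrow> summable (\<lambda>n. \<bar>a n\<bar> * r ^ n * norm (w n))"
    and \<tau>: "\<tau> \<ge> 0"
  shows "summable (\<lambda>n. norm ((a n * (real n + b) * \<tau> powr (real n + b - 1)) *\<^sub>R w n))"
proof (cases "\<tau> = 0")
  case True thus ?thesis by simp
next
  case False
  with \<tau> have \<tau>: "\<tau> > 0" by simp
  have S: "summable (\<lambda>n. \<tau> powr (b - 1) * (\<bar>a n\<bar> * (real n + b) * \<tau> ^ n * norm (w n)))"
    using summ_nb[OF b summ, of \<tau>] \<tau> by (intro summable_mult) auto
  have E: "norm ((a n * (real n + b) * \<tau> powr (real n + b - 1)) *\<^sub>R w n) =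
      \<tau> powr (b - 1) * (\<bar>a n\<bar> * (real n + b) * \<tau> ^ n * norm (w n))" for n
  proof -
    have "norm ((a n * (real n + b) * \<tau> powr (real n + b - 1)) *\<^sub>R w n) =
      \<bar>a n\<bar> * (real n + b) * \<tau> powr (real n + b - 1) * norm (w n)"
      using b \<tau> by (simp add: abs_mult)
    also have "\<dots> = \<tau> powr (b - 1) * (\<bar>a n\<bar> * (real n + b) * \<tau> ^ n * norm (w n))"
      unfolding powr_nat_add1[OF \<tau>] by (simp add: algebra_simps)
    finally show ?thesis .
  qed
  show ?thesis unfolding E by (rule S)
qed

lemma summ_F:
  fixes a :: "nat \<Rightarrow> real" and w :: "nat \<Rightarrow> 'v::real_normed_vector"
  assumes summ: "\<And>r. r \<ge> 0 \<Longrightarrow> summable (\<lambda>n. \<bar>a n\<bar> * r ^ n * norm (w n))"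
    and \<tau>: "\<tau> \<ge> 0"
  shows "summable (\<lambda>n. norm ((a n * \<tau> powr (real n + b)) *\<^sub>R w n))"
proof (cases "\<tau> = 0")
  case True thus ?thesis by simp
next
  case False
  with \<tau> have \<tau>: "\<tau> > 0" by simp
  have S: "summable (\<lambda>n. \<tau> powr b * (\<bar>a n\<bar> * \<tau> ^ n * norm (w n)))"
    using summ[of \<tau>] \<tau> by (intro summable_mult) auto
  have E: "norm ((a n * \<tau> powr (real n + b)) *\<^sub>R w n) =
      \<tau> powr b * (\<bar>a n\<bar> * \<tau> ^ n * norm (w n))" for n
  proof -
    have "norm ((a n * \<tau> powr (real n + b)) *\<^sub>R w n) =
      \<bar>a n\<bar> * \<tau> powr (real n + b) * norm (w n)"
      using \<tau> by (simp add: abs_mult)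
    also have "\<dots> = \<tau> powr b * (\<bar>a n\<bar> * \<tau> ^ n * norm (w n))"
      unfolding powr_nat_add[OF \<tau>] by (simp add: algebra_simps)
    finally show ?thesis .
  qed
  show ?thesis unfolding E by (rule S)
qed



definition gser :: "(nat \<Rightarrow> real) \<Rightarrow> real \<Rightarrow> (nat \<Rightarrow> 'v::real_normed_vector) \<Rightarrow> real \<Rightarrow> 'v" where
  "gser a b w \<tau> = (\<Sum>n. (a n * \<tau> powr (real n + b)) *\<^sub>R w n)"

definition gser' :: "(nat \<Rightarrow> real) \<Rightarrow> real \<Rightarrow> (nat \<Rightarrow> 'v::real_normed_vector) \<Rightarrow> real \<Rightarrow> 'v" where
  "gser' a b w \<tau> = (\<Sum>n. (a n * (real n + b) * \<tau> powr (real n + b - 1)) *\<^sub>R w n)"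

lemma gser_deriv:
  fixes a :: "nat \<Rightarrow> real" and w :: "nat \<Rightarrow> 'v::banach"
  assumes b: "b > 0" and summ: "\<And>r. r \<ge> 0 \<Longrightarrow> summable (\<lambda>n. \<bar>a n\<bar> * r ^ n * norm (w n))"
    and t0: "t0 > 0"
  shows "(gser a b w has_vector_derivative gser' a b w t0) (at t0)"
proof -
  define S where "S = {t0/2<..<2*t0}"
  have S: "open S" "convex S" "t0 \<in> S" using t0 by (auto simp: S_def)
  have Spos: "x > 0" if "x \<in> S" for x using that t0 by (auto simp: S_def)
  define D where "D n x = (a n * (real n + b) * x powr (real n + b - 1)) *\<^sub>R w n" for n x
  define K where "K = (t0/2) powr (b - 1) + (2*t0) powr (b - 1)"
  have Kb: "x powr (b - 1) \<le> K" if "x \<in> S" for x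
  proof (cases "b - 1 \<ge> 0")
    case True
    hence "x powr (b - 1) \<le> (2*t0) powr (b - 1)" using that by (intro powr_mono2) (auto simp: S_def)
    thus ?thesis unfolding K_def by (smt (verit) powr_ge_zero)
  next
    case False
    hence "x powr (b - 1) \<le> (t0/2) powr (b - 1)" using that t0 by (intro powr_mono2') (auto simp: S_def)
    thus ?thesis unfolding K_def by (smt (verit) powr_ge_zero)
  qed
  have K0: "K \<ge> 0" unfolding K_def by simp
  define M where "M n = K * (\<bar>a n\<bar> * (real n + b) * (2*t0) ^ n * norm (w n))" for n
  have Msum: "summable M" unfolding M_def using summ_nb[OF b summ, of "2*t0"] t0 by (intro summable_mult) auto
  have Mb: "norm (D n x) \<le> M n" if "x \<in> S" for n x
  proof -
    have x: "x > 0" using Spos[OF that] .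
    have "norm (D n x) = x powr (b - 1) * (\<bar>a n\<bar> * (real n + b) * x ^ n * norm (w n))"
    proof -
      have "norm (D n x) = \<bar>a n\<bar> * (real n + b) * x powr (real n + b - 1) * norm (w n)"
        unfolding D_def using x b by (simp add: abs_mult)
      also have "\<dots> = x powr (b - 1) * (\<bar>a n\<bar> * (real n + b) * x ^ n * norm (w n))"
        unfolding powr_nat_add1[OF x] by (simp add: algebra_simps)
      finally show ?thesis .
    qed
    also have "\<dots> \<le> K * (\<bar>a n\<bar> * (real n + b) * (2*t0) ^ n * norm (w n))"
      using x b Kb[OF that] that K0
      by (intro mult_mono mult_left_mono mult_right_mono power_mono) (auto simp: S_def)
    finally show ?thesis unfolding M_def .
  qed
  have unif: "uniform_limit S (\<lambda>n x. \<Sum>i<n. D i x) (\<lambda>x. \<Sum>i. D i x) sequentially"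
    by (rule Weierstrass_m_test[OF Mb Msum])
  have deriv: "((\<lambda>x. (a n * x powr (real n + b)) *\<^sub>R w n) has_derivative (\<lambda>h. h *\<^sub>R D n x)) (at x within S)"
    if "x \<in> S" for n x
  proof -
    have "((\<lambda>x. a n * x powr (real n + b)) has_real_derivative a n * ((real n + b) * x powr (real n + b - 1))) (at x)"
      using Spos[OF that] by (intro DERIV_cmult has_real_derivative_powr)
    hence "((\<lambda>x. (a n * x powr (real n + b)) *\<^sub>R w n) has_vector_derivative (a n * ((real n + b) * x powr (real n + b - 1))) *\<^sub>R w n) (at x)"
      using has_vector_derivative_scaleR[of _ _ x UNIV "\<lambda>_. w n" 0] by (simp add: has_vector_derivative_const)
    thus ?thesis unfolding has_vector_derivative_def D_def
      by (auto intro: has_derivative_at_withinI simp: mult.assoc)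
  qed
  have "\<exists>g. \<forall>x\<in>S. (\<lambda>n. (a n * x powr (real n + b)) *\<^sub>R w n) sums g x \<and>
           (g has_derivative (\<lambda>h. h *\<^sub>R (\<Sum>i. D i x))) (at x within S)"
  proof (rule has_derivative_series[OF S(2) deriv _ S(3)])
    fix e :: real assume e: "e > 0"
    from uniform_limitD[OF unif e]
    have "\<forall>\<^sub>F n in sequentially. \<forall>x\<in>S. dist (\<Sum>i<n. D i x) (\<Sum>i. D i x) < e" .
    thus "\<forall>\<^sub>F n in sequentially. \<forall>x\<in>S. \<forall>h. norm ((\<Sum>i<n. h *\<^sub>R D i x) - h *\<^sub>R (\<Sum>i. D i x)) \<le> e * norm h"
    proof (rule eventually_mono, intro ballI allI)
      fix n x h assume H: "\<forall>x\<in>S. dist (\<Sum>i<n. D i x) (\<Sum>i. D i x) < e" and x: "x \<in> S"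
      have "norm ((\<Sum>i<n. h *\<^sub>R D i x) - h *\<^sub>R (\<Sum>i. D i x)) = \<bar>h\<bar> * dist (\<Sum>i<n. D i x) (\<Sum>i. D i x)"
        by (simp add: dist_norm scaleR_sum_right[symmetric] scaleR_diff_right[symmetric])
      also have "\<dots> \<le> \<bar>h\<bar> * e" by (rule mult_left_mono[OF less_imp_le[OF bspec[OF H x]] abs_ge_zero])
      also have "\<dots> = e * norm h" by (simp only: real_norm_def mult.commute)
      finally show "norm ((\<Sum>i<n. h *\<^sub>R D i x) - h *\<^sub>R (\<Sum>i. D i x)) \<le> e * norm h" .
    qed
  next
    show "(\<lambda>n. (a n * t0 powr (real n + b)) *\<^sub>R w n) sums (\<Sum>n. (a n * t0 powr (real n + b)) *\<^sub>R w n)"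
    proof -
      have "summable (\<lambda>n. norm ((a n * t0 powr (real n + b)) *\<^sub>R w n))"
        by (rule summ_F[OF summ]) (use t0 in auto)
      thus ?thesis by (rule summable_sums[OF summable_norm_cancel])
    qed
  qed
  then obtain g where g: "\<And>x. x \<in> S \<Longrightarrow> (\<lambda>n. (a n * x powr (real n + b)) *\<^sub>R w n) sums g x"
      "\<And>x. x \<in> S \<Longrightarrow> (g has_derivative (\<lambda>h. h *\<^sub>R (\<Sum>i. D i x))) (at x within S)" by blast
  have "(g has_derivative (\<lambda>h. h *\<^sub>R (\<Sum>i. D i t0))) (at t0)"
    using g(2)[OF S(3)] at_within_open[OF S(3,1)] by simp
  moreover have "g x = gser a b w x" if "x \<in> S" for x
    using g(1)[OF that] unfolding gser_def by (simp add: sums_iff)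
  ultimately have "(gser a b w has_derivative (\<lambda>h. h *\<^sub>R (\<Sum>i. D i t0))) (at t0)"
    using has_derivative_transform_within_open[of g _ t0 UNIV S] S by auto
  thus ?thesis unfolding has_vector_derivative_def gser'_def D_def .
qed



lemma gser_integral:
  fixes a :: "nat \<Rightarrow> real" and w :: "nat \<Rightarrow> 'v::euclidean_space"
  assumes b: "b > 0" and summ: "\<And>r. r \<ge> 0 \<Longrightarrow> summable (\<lambda>n. \<bar>a n\<bar> * r ^ n * norm (w n))"
    and t: "t > 0" and \<alpha>: "0 < \<alpha>" "\<alpha> < 1"
  shows "\<exists>I. ((\<lambda>\<tau>. (t - \<tau>) powr (- \<alpha>) *\<^sub>R gser' a b w \<tau>) has_integral I) {0..t} \<and>
    (\<lambda>n. (a n * (real n + b) * Beta (real n + b) (1 - \<alpha>) * t powr (real n + b - \<alpha>)) *\<^sub>R w n) sums I"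
proof -
  define D where "D n x = (a n * (real n + b) * x powr (real n + b - 1)) *\<^sub>R w n" for n x
  define c where "c n = (a n * (real n + b) * Beta (real n + b) (1 - \<alpha>) * t powr (real n + b - \<alpha>)) *\<^sub>R w n" for n
  define f where "f N \<tau> = (\<Sum>n<N. (t - \<tau>) powr (- \<alpha>) *\<^sub>R D n \<tau>)" for N \<tau>
  define S0 where "S0 = (\<Sum>n. \<bar>a n\<bar> * (real n + b) * t ^ n * norm (w n))"
  define h where "h \<tau> = S0 * (\<tau> powr (b - 1) * (t - \<tau>) powr ((1 - \<alpha>) - 1))" for \<tau>
  have S0sum: "summable (\<lambda>n. \<bar>a n\<bar> * (real n + b) * t ^ n * norm (w n))"
    by (rule summ_nb[OF b summ less_imp_le[OF t]])
  have trm: "((\<lambda>\<tau>. (t - \<tau>) powr (- \<alpha>) *\<^sub>R D n \<tau>) has_integral c n) {0..t}" for n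
  proof -
    have "((\<lambda>\<tau>. \<tau> powr (real n + b - 1) * (t - \<tau>) powr ((1 - \<alpha>) - 1)) has_integral
        Beta (real n + b) (1 - \<alpha>) * t powr (real n + b + (1 - \<alpha>) - 1)) {0..t}"
      using b \<alpha> t by (intro Beta_integral_t) auto
    from has_integral_scaleR_left[OF has_integral_mult_right[OF this, of "a n * (real n + b)"], of "w n"]
    show ?thesis unfolding c_def D_def
      by (simp add: algebra_simps)
  qed
  have fint: "(f N has_integral (\<Sum>n<N. c n)) {0..t}" for N
    unfolding f_def by (intro has_integral_sum trm) auto
  have hint: "(h has_integral S0 * (Beta b (1 - \<alpha>) * t powr (b + (1 - \<alpha>) - 1))) {0..t}"
    unfolding h_def using b \<alpha> t by (intro has_integral_mult_right Beta_integral_t) auto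
  have bound: "norm (f N \<tau>) \<le> h \<tau>" if "\<tau> \<in> {0..t}" for N \<tau>
  proof -
    have \<tau>: "0 \<le> \<tau>" "\<tau> \<le> t" using that by auto
    have tb: "norm ((t - \<tau>) powr (- \<alpha>) *\<^sub>R D n \<tau>) \<le>
        (\<tau> powr (b - 1) * (t - \<tau>) powr (- \<alpha>)) * (\<bar>a n\<bar> * (real n + b) * t ^ n * norm (w n))" for n
    proof (cases "\<tau> = 0")
      case True thus ?thesis by (simp add: D_def)
    next
      case False
      hence \<tau>p: "\<tau> > 0" using \<tau> by simp
      have "norm ((t - \<tau>) powr (- \<alpha>) *\<^sub>R D n \<tau>) =
          (t - \<tau>) powr (- \<alpha>) * (\<bar>a n\<bar> * (real n + b) * \<tau> powr (real n + b - 1) * norm (w n))"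
        unfolding D_def using b \<tau>p by (simp add: abs_mult)
      also have "\<dots> = (\<tau> powr (b - 1) * (t - \<tau>) powr (- \<alpha>)) * (\<bar>a n\<bar> * (real n + b) * \<tau> ^ n * norm (w n))"
        unfolding powr_nat_add1[OF \<tau>p] by (simp add: algebra_simps)
      also have "\<dots> \<le> (\<tau> powr (b - 1) * (t - \<tau>) powr (- \<alpha>)) * (\<bar>a n\<bar> * (real n + b) * t ^ n * norm (w n))"
        using \<tau> b by (intro mult_left_mono mult_right_mono power_mono) auto
      finally show ?thesis .
    qed
    have "norm (f N \<tau>) \<le> (\<Sum>n<N. norm ((t - \<tau>) powr (- \<alpha>) *\<^sub>R D n \<tau>))"
      unfolding f_def by (rule norm_sum)
    also have "\<dots> \<le> (\<Sum>n<N. (\<tau> powr (b - 1) * (t - \<tau>) powr (- \<alpha>)) * (\<bar>a n\<bar> * (real n + b) * t ^ n * norm (w n)))"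
      by (intro sum_mono tb)
    also have "\<dots> = (\<tau> powr (b - 1) * (t - \<tau>) powr (- \<alpha>)) * (\<Sum>n<N. \<bar>a n\<bar> * (real n + b) * t ^ n * norm (w n))"
      by (simp add: sum_distrib_left)
    also have "\<dots> \<le> (\<tau> powr (b - 1) * (t - \<tau>) powr (- \<alpha>)) * S0"
      unfolding S0_def using b t by (intro mult_left_mono sum_le_suminf S0sum) auto
    also have "\<dots> = h \<tau>" unfolding h_def by simp
    finally show ?thesis .
  qed
  have conv: "(\<lambda>N. f N \<tau>) \<longlonglongrightarrow> (t - \<tau>) powr (- \<alpha>) *\<^sub>R gser' a b w \<tau>" if "\<tau> \<in> {0..t}" for \<tau>
  proof -
    have "summable (\<lambda>n. norm (D n \<tau>))"
      unfolding D_def by (rule summ_D[OF b summ]) (use that in auto)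
    hence "(\<lambda>N. \<Sum>n<N. D n \<tau>) \<longlonglongrightarrow> gser' a b w \<tau>"
    proof -
      have e: "gser' a b w \<tau> = (\<Sum>n. D n \<tau>)" unfolding gser'_def D_def ..
      show ?thesis unfolding e by (rule summable_LIMSEQ[OF summable_norm_cancel[OF \<open>summable (\<lambda>n. norm (D n \<tau>))\<close>]])
    qed
    hence "(\<lambda>N. (t - \<tau>) powr (- \<alpha>) *\<^sub>R (\<Sum>n<N. D n \<tau>)) \<longlonglongrightarrow> (t - \<tau>) powr (- \<alpha>) *\<^sub>R gser' a b w \<tau>"
      by (intro tendsto_scaleR tendsto_const)
    thus ?thesis unfolding f_def by (simp add: scaleR_sum_right)
  qed
  have DC: "(\<lambda>\<tau>. (t - \<tau>) powr (- \<alpha>) *\<^sub>R gser' a b w \<tau>) integrable_on {0..t}"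
    "(\<lambda>N. integral {0..t} (f N)) \<longlonglongrightarrow> integral {0..t} (\<lambda>\<tau>. (t - \<tau>) powr (- \<alpha>) *\<^sub>R gser' a b w \<tau>)"
    using dominated_convergence[of f "{0..t}" h, OF _ _ bound conv] fint hint
    by (auto simp: has_integral_integrable)
  have "(\<lambda>N. \<Sum>n<N. c n) \<longlonglongrightarrow> integral {0..t} (\<lambda>\<tau>. (t - \<tau>) powr (- \<alpha>) *\<^sub>R gser' a b w \<tau>)"
    using DC(2) unfolding integral_unique[OF fint] .
  hence "c sums integral {0..t} (\<lambda>\<tau>. (t - \<tau>) powr (- \<alpha>) *\<^sub>R gser' a b w \<tau>)"
    by (simp add: sums_def)
  with DC(1) show ?thesis unfolding c_def by (blast intro: integrable_integral)
qed



lemma matpow_scaleR: "matpow (s *\<^sub>R (A::complex^'d^'d)) n = (s ^ n) *\<^sub>R matpow A n"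
  by (induction n) (simp_all add: matrix_scalar_ac scalar_matrix_assoc[symmetric])

lemma matpow_Suc_vec: "matpow (A::complex^'d^'d) (Suc n) *v v = A *v (matpow A n *v v)"
  by (simp add: matrix_vector_mul_assoc)

lemma linear_mat_left: "linear (\<lambda>N::complex^'d^'d. A ** N)"
  by (rule linearI) (simp_all add: matrix_add_ldistrib vec_eq_iff matrix_matrix_mult_def scaleR_sum_right distrib_left sum.distrib)

lemma linear_mat_vec: "linear (\<lambda>N::complex^'d^'d. N *v v)"
  by (rule linearI) (simp_all add: matrix_vector_mult_add_rdistrib vec_eq_iff matrix_vector_mult_def scaleR_sum_right distrib_right sum.distrib)

lemma matpow_norm_bound: "\<exists>K\<ge>0. \<forall>n. norm (matpow (A::complex^'d^'d) n) \<le> norm (mat 1 :: complex^'d^'d) * K ^ n"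
proof -
  obtain B where B: "\<And>N::complex^'d^'d. norm (A ** N) \<le> B * norm N"
    using linear_bounded[OF linear_mat_left[of A]] by blast
  define K where "K = max B 0"
  have "norm (matpow A n) \<le> norm (mat 1 :: complex^'d^'d) * K ^ n" for n
  proof (induction n)
    case (Suc n)
    have "norm (matpow A (Suc n)) \<le> B * norm (matpow A n)" using B by simp
    also have "\<dots> \<le> K * norm (matpow A n)" unfolding K_def by (intro mult_right_mono) auto
    also have "\<dots> \<le> K * (norm (mat 1 :: complex^'d^'d) * K ^ n)"
      using Suc unfolding K_def by (intro mult_left_mono) auto
    finally show ?case by (simp add: algebra_simps)
  qed simp
  thus ?thesis unfolding K_def by (intro exI[of _ "max B 0"]) auto
qed

lemma matpow_vec_bound: "\<exists>K\<ge>0. \<exists>C. \<forall>n. norm (matpow (A::complex^'d^'d) n *v v) \<le> C * K ^ n"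
proof -
  obtain K where K: "K \<ge> 0" "\<And>n. norm (matpow A n) \<le> norm (mat 1 :: complex^'d^'d) * K ^ n"
    using matpow_norm_bound by blast
  obtain B where B: "\<And>N::complex^'d^'d. norm (N *v v) \<le> B * norm N"
    using linear_bounded[OF linear_mat_vec[of v]] by blast
  have "norm (matpow A n *v v) \<le> max B 0 * (norm (mat 1 :: complex^'d^'d) * K ^ n)" for n
  proof -
    have "norm (matpow A n *v v) \<le> B * norm (matpow A n)" by (rule B)
    also have "\<dots> \<le> max B 0 * norm (matpow A n)" by (intro mult_right_mono) auto
    also have "\<dots> \<le> max B 0 * (norm (mat 1 :: complex^'d^'d) * K ^ n)"
      by (intro mult_left_mono K(2)) auto
    finally show ?thesis .
  qed
  thus ?thesis using K(1) by (intro exI[of _ K] conjI exI[of _ "max B 0 * norm (mat 1 :: complex^'d^'d)"]) (auto simp: mult.assoc)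
qed

lemma summ_hyp:
  fixes a :: "nat \<Rightarrow> real" and w :: "nat \<Rightarrow> 'v::real_normed_vector"
  assumes nz: "\<And>n. a n \<noteq> 0" and lim: "(\<lambda>n. a (Suc n) / a n) \<longlonglongrightarrow> 0"
    and K: "K \<ge> 0" and wb: "\<And>n. norm (w n) \<le> C * K ^ n" and r: "r \<ge> 0"
  shows "summable (\<lambda>n. \<bar>a n\<bar> * r ^ n * norm (w n))"
proof (rule summable_comparison_test'[of "\<lambda>n. C * (\<bar>a n\<bar> * (r * K) ^ n)"])
  show "summable (\<lambda>n. C * (\<bar>a n\<bar> * (r * K) ^ n))"
    using summable_ratio0[OF nz lim, of "r * K"] K r by (intro summable_mult) auto
  fix n
  have "\<bar>a n\<bar> * r ^ n * norm (w n) \<le> \<bar>a n\<bar> * r ^ n * (C * K ^ n)"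
    using r by (intro mult_left_mono wb) auto
  thus "norm (\<bar>a n\<bar> * r ^ n * norm (w n)) \<le> C * (\<bar>a n\<bar> * (r * K) ^ n)"
    using r by (simp add: power_mult_distrib algebra_simps)
qed



lemma coef_scale:
  fixes p t \<alpha> :: real
  assumes p: "p > 0" and t: "t > 0" and \<alpha>: "0 < \<alpha>" "\<alpha> < 1"
  shows "Gamma (2 - \<alpha>) / t powr (1 - \<alpha>) * (1 / Gamma (1 - \<alpha>)) * (a * p * Beta p (1 - \<alpha>) * t powr (p - \<alpha>))
       = a * (Gamma (2 - \<alpha>) * Gamma (p + 1) / Gamma (p + 1 - \<alpha>)) * t powr (p - 1)"
proof -
  have g1: "Gamma (1 - \<alpha>) > 0" using \<alpha> by (intro Gamma_real_pos) simp
  have gp: "Gamma (p + 1) = p * Gamma p" using Gamma_plus1_pos[OF p] .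
  have tp: "t powr (p - \<alpha>) = t powr (p - 1) * t powr (1 - \<alpha>)"
  proof -
    have "p - \<alpha> = (p - 1) + (1 - \<alpha>)" by simp
    thus ?thesis by (simp only: powr_add)
  qed
  have t1: "t powr (1 - \<alpha>) > 0" using t by simp
  have B: "Beta p (1 - \<alpha>) = Gamma p * Gamma (1 - \<alpha>) / Gamma (p + 1 - \<alpha>)"
    unfolding Beta_def by (simp add: algebra_simps)
  show ?thesis unfolding B tp gp using g1 t1 by (simp add: field_simps)
qed

lemma gser_L:
  fixes a :: "nat \<Rightarrow> real" and w :: "nat \<Rightarrow> 'v::real_normed_vector"
  assumes b: "b > 0" and t: "t > 0" and \<alpha>: "0 < \<alpha>" "\<alpha> < 1"
    and S: "(\<lambda>n. (a n * (real n + b) * Beta (real n + b) (1 - \<alpha>) * t powr (real n + b - \<alpha>)) *\<^sub>R w n) sums I"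
  shows "(\<lambda>n. (a n * (Gamma (2 - \<alpha>) * Gamma (real n + b + 1) / Gamma (real n + b + 1 - \<alpha>)) * t powr (real n + b - 1)) *\<^sub>R w n)
     sums ((Gamma (2 - \<alpha>) / t powr (1 - \<alpha>) * (1 / Gamma (1 - \<alpha>))) *\<^sub>R I)"
proof -
  from sums_scaleR_right[OF S, of "Gamma (2 - \<alpha>) / t powr (1 - \<alpha>) * (1 / Gamma (1 - \<alpha>))"]
  show ?thesis
    using coef_scale[of "real n + b" t \<alpha> "a n" for n] b t \<alpha>
    by (simp add: scaleR_scaleR)
qed

lemma mittag_coeff_0: "mittag_coeff \<alpha> 0 = 1"
  by (simp add: mittag_coeff_def)

lemma mittag_coeff_Suc:
  "mittag_coeff \<alpha> (Suc n) = mittag_coeff \<alpha> n * (Gamma (2 - \<alpha>) * (Gamma (real n + 2) / Gamma (real n + 2 - \<alpha>)))"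
proof -
  have "(\<Prod>j=1..Suc n. Gamma (real j + 1) / Gamma (real j + 1 - \<alpha>)) =
      Gamma (real (Suc n) + 1) / Gamma (real (Suc n) + 1 - \<alpha>) * (\<Prod>j=1..n. Gamma (real j + 1) / Gamma (real j + 1 - \<alpha>))"
    by (rule prod.nat_ivl_Suc') simp
  moreover have "real (Suc n) + 1 = real n + 2" by simp
  ultimately show ?thesis unfolding mittag_coeff_def by (simp add: algebra_simps)
qed

lemma mittag_coeff_pos: "0 < \<alpha> \<Longrightarrow> \<alpha> < 1 \<Longrightarrow> mittag_coeff \<alpha> n > 0"
proof (induction n)
  case 0 thus ?case by (simp add: mittag_coeff_0)
next
  case (Suc n)
  have "Gamma (2 - \<alpha>) > 0" "Gamma (real n + 2) > 0" "Gamma (real n + 2 - \<alpha>) > 0"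
    using Suc.prems by (auto intro!: Gamma_real_pos)
  thus ?case using Suc by (simp add: mittag_coeff_Suc)
qed

definition Pco :: "real \<Rightarrow> real \<Rightarrow> nat \<Rightarrow> real" where
  "Pco \<alpha> \<delta> j = (\<Prod>i=2..j+2. Gamma (real i - \<alpha> + \<delta>)) /
             (Gamma (2 - \<alpha>) ^ (j + 1) * (\<Prod>i=2..j+2. Gamma (real i + \<delta>)))"

lemma Pco_0: "Pco \<alpha> \<delta> 0 = Gamma (2 - \<alpha> + \<delta>) / (Gamma (2 - \<alpha>) * Gamma (2 + \<delta>))"
  by (simp add: Pco_def)

lemma Pco_Suc: "Pco \<alpha> \<delta> (Suc j) = Pco \<alpha> \<delta> j * (Gamma (real j + 3 - \<alpha> + \<delta>) / (Gamma (2 - \<alpha>) * Gamma (real j + 3 + \<delta>)))"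
proof -
  have e: "Suc j + 2 = Suc (j + 2)" by simp
  have "real (Suc (j + 2)) = real j + 3" by simp
  thus ?thesis unfolding Pco_def e
    by (simp only: prod.nat_ivl_Suc'[of 2 "j + 2"] le_add2 le_SucI) (simp add: algebra_simps)
qed

lemma Pco_pos: "0 < \<alpha> \<Longrightarrow> \<alpha> < 1 \<Longrightarrow> \<delta> > 0 \<Longrightarrow> Pco \<alpha> \<delta> j > 0"
  unfolding Pco_def
  by (intro divide_pos_pos mult_pos_pos zero_less_power prod_pos ballI Gamma_real_pos) auto

lemma Pco_ratio: "0 < \<alpha> \<Longrightarrow> \<alpha> < 1 \<Longrightarrow> \<delta> > 0 \<Longrightarrow> (\<lambda>j. Pco \<alpha> \<delta> (Suc j) / Pco \<alpha> \<delta> j) \<longlonglongrightarrow> 0"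
proof -
  assume a: "0 < \<alpha>" "\<alpha> < 1" "\<delta> > 0"
  have "(\<lambda>j. (1 / Gamma (2 - \<alpha>)) * (Gamma (real j + (3 + \<delta>) - \<alpha>) / Gamma (real j + (3 + \<delta>)))) \<longlonglongrightarrow> (1 / Gamma (2 - \<alpha>)) * 0"
    using a by (intro tendsto_mult tendsto_const Gamma_ratio_lim) auto
  moreover have "Pco \<alpha> \<delta> (Suc j) / Pco \<alpha> \<delta> j = (1 / Gamma (2 - \<alpha>)) * (Gamma (real j + (3 + \<delta>) - \<alpha>) / Gamma (real j + (3 + \<delta>)))" for j
    using Pco_pos[OF a, of j] unfolding Pco_Suc by (simp add: algebra_simps)
  ultimately show ?thesis by simp
qed

lemma mittag_ratio: "0 < \<alpha> \<Longrightarrow> \<alpha> < 1 \<Longrightarrow>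
  (\<lambda>n. (1 / mittag_coeff \<alpha> (Suc (Suc n))) / (1 / mittag_coeff \<alpha> (Suc n))) \<longlonglongrightarrow> 0"
proof -
  assume a: "0 < \<alpha>" "\<alpha> < 1"
  have "(\<lambda>n. (1 / Gamma (2 - \<alpha>)) * (Gamma (real n + 3 - \<alpha>) / Gamma (real n + 3))) \<longlonglongrightarrow> (1 / Gamma (2 - \<alpha>)) * 0"
    using a by (intro tendsto_mult tendsto_const Gamma_ratio_lim) auto
  moreover have "(1 / mittag_coeff \<alpha> (Suc (Suc n))) / (1 / mittag_coeff \<alpha> (Suc n)) =
     (1 / Gamma (2 - \<alpha>)) * (Gamma (real n + 3 - \<alpha>) / Gamma (real n + 3))" for n
  proof -
    have "Gamma (2 - \<alpha>) > 0" "Gamma (real n + 3) > 0" "Gamma (real n + 3 - \<alpha>) > 0"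
      using a by (auto intro!: Gamma_real_pos)
    moreover have "mittag_coeff \<alpha> (Suc n) > 0" using mittag_coeff_pos[OF a] .
    moreover have "real (Suc n) + 2 = real n + 3" by simp
    ultimately show ?thesis
      by (subst mittag_coeff_Suc[of _ "Suc n"]) (simp add: field_simps)
  qed
  ultimately show ?thesis by simp
qed



lemma mittag_ratio0: "0 < \<alpha> \<Longrightarrow> \<alpha> < 1 \<Longrightarrow>
  (\<lambda>n. (1 / mittag_coeff \<alpha> (Suc n)) / (1 / mittag_coeff \<alpha> n)) \<longlonglongrightarrow> 0"
proof -
  assume a: "0 < \<alpha>" "\<alpha> < 1"
  have "(\<lambda>n. (1 / Gamma (2 - \<alpha>)) * (Gamma (real n + 2 - \<alpha>) / Gamma (real n + 2))) \<longlonglongrightarrow> (1 / Gamma (2 - \<alpha>)) * 0"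
    using a by (intro tendsto_mult tendsto_const Gamma_ratio_lim) auto
  moreover have "(1 / mittag_coeff \<alpha> (Suc n)) / (1 / mittag_coeff \<alpha> n) =
     (1 / Gamma (2 - \<alpha>)) * (Gamma (real n + 2 - \<alpha>) / Gamma (real n + 2))" for n
  proof -
    have "Gamma (2 - \<alpha>) > 0" "Gamma (real n + 2) > 0" "Gamma (real n + 2 - \<alpha>) > 0"
      using a by (auto intro!: Gamma_real_pos)
    moreover have "mittag_coeff \<alpha> n > 0" using mittag_coeff_pos[OF a] .
    ultimately show ?thesis
      by (subst mittag_coeff_Suc) (simp add: field_simps)
  qed
  ultimately show ?thesis by simp
qed

lemma scaleR_mv: "((c::real) *\<^sub>R (M::complex^'d^'d)) *v v = c *\<^sub>R (M *v v)"
  by (simp add: vec_eq_iff matrix_vector_mult_def scaleR_sum_right)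

lemma vec_decomp:
  "(\<chi> i. l i * complex_of_real (s i)) = (\<Sum>k\<in>UNIV. s k *\<^sub>R ((\<chi> i. if i = k then l k else 0)::complex^'d))"
  by (simp add: vec_eq_iff sum_component if_distrib cong: if_cong) (simp add: scaleR_conv_of_real mult.commute)

lemma MS:
  fixes A :: "complex^'d^'d"
  assumes a: "0 < \<alpha>" "\<alpha> < 1"
  shows "(\<lambda>n. (\<tau> ^ n / mittag_coeff \<alpha> n) *\<^sub>R (matpow A n *v x0)) sums (mittag_mat \<alpha> (\<tau> *\<^sub>R A) *v x0)"
proof -
  obtain K where K: "K \<ge> 0" "\<And>n. norm (matpow A n) \<le> norm (mat 1 :: complex^'d^'d) * K ^ n"
    using matpow_norm_bound by blast
  have nz: "1 / mittag_coeff \<alpha> n \<noteq> 0" for n using mittag_coeff_pos[OF a, of n] by simp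
  have wb: "norm (matpow (\<tau> *\<^sub>R A) n) \<le> norm (mat 1 :: complex^'d^'d) * (\<bar>\<tau>\<bar> * K) ^ n" for n
  proof -
    have "norm (matpow (\<tau> *\<^sub>R A) n) = \<bar>\<tau>\<bar> ^ n * norm (matpow A n)"
      by (simp add: matpow_scaleR power_abs)
    also have "\<dots> \<le> \<bar>\<tau>\<bar> ^ n * (norm (mat 1 :: complex^'d^'d) * K ^ n)"
      by (intro mult_left_mono K(2)) auto
    finally show ?thesis by (simp add: power_mult_distrib algebra_simps)
  qed
  have "summable (\<lambda>n. \<bar>1 / mittag_coeff \<alpha> n\<bar> * 1 ^ n * norm (matpow (\<tau> *\<^sub>R A) n))"
    by (rule summ_hyp[OF nz mittag_ratio0[OF a] _ wb]) (use K in auto)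
  hence "summable (\<lambda>n. norm ((1 / mittag_coeff \<alpha> n) *\<^sub>R matpow (\<tau> *\<^sub>R A) n))"
    by simp
  hence "(\<lambda>n. (1 / mittag_coeff \<alpha> n) *\<^sub>R matpow (\<tau> *\<^sub>R A) n) sums mittag_mat \<alpha> (\<tau> *\<^sub>R A)"
    unfolding mittag_mat_def by (rule summable_sums[OF summable_norm_cancel])
  from bounded_linear.sums[OF linear_mat_vec[of x0, unfolded linear_conv_bounded_linear] this]
  have S: "(\<lambda>n. ((1 / mittag_coeff \<alpha> n) *\<^sub>R matpow (\<tau> *\<^sub>R A) n) *v x0) sums (mittag_mat \<alpha> (\<tau> *\<^sub>R A) *v x0)" .
  have E: "((1 / mittag_coeff \<alpha> n) *\<^sub>R matpow (\<tau> *\<^sub>R A) n) *v x0 = (\<tau> ^ n / mittag_coeff \<alpha> n) *\<^sub>R (matpow A n *v x0)" for n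
  proof -
    have "((1 / mittag_coeff \<alpha> n) *\<^sub>R matpow (\<tau> *\<^sub>R A) n) *v x0 = (1 / mittag_coeff \<alpha> n) *\<^sub>R (matpow (\<tau> *\<^sub>R A) n *v x0)"
      by (rule scaleR_mv)
    also have "\<dots> = (1 / mittag_coeff \<alpha> n) *\<^sub>R ((\<tau> ^ n *\<^sub>R matpow A n) *v x0)" by (simp only: matpow_scaleR)
    also have "\<dots> = (1 / mittag_coeff \<alpha> n) *\<^sub>R (\<tau> ^ n *\<^sub>R (matpow A n *v x0))" by (simp only: scaleR_mv)
    also have "\<dots> = (\<tau> ^ n / mittag_coeff \<alpha> n) *\<^sub>R (matpow A n *v x0)" by (simp only: scaleR_scaleR) simp
    finally show ?thesis .
  qed
  show ?thesis using S unfolding E .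
qed

lemma summ_k:
  fixes A :: "complex^'d^'d"
  assumes a: "0 < \<alpha>" "\<alpha> < 1" and d: "\<delta> > 0" and r: "r \<ge> 0"
  shows "summable (\<lambda>j. \<bar>Pco \<alpha> \<delta> j\<bar> * r ^ j * norm (matpow A j *v v))"
proof -
  obtain K C where K: "K \<ge> 0" "\<And>n. norm (matpow A n *v v) \<le> C * K ^ n"
    using matpow_vec_bound by blast
  have nz: "Pco \<alpha> \<delta> n \<noteq> 0" for n using Pco_pos[OF a d, of n] by simp
  show ?thesis by (rule summ_hyp[OF nz Pco_ratio[OF a d] K r])
qed

lemma summ_0:
  fixes A :: "complex^'d^'d"
  assumes a: "0 < \<alpha>" "\<alpha> < 1" and r: "r \<ge> 0"
  shows "summable (\<lambda>n. \<bar>1 / mittag_coeff \<alpha> (Suc n)\<bar> * r ^ n * norm (matpow A (Suc n) *v v))"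
proof -
  obtain K C where K: "K \<ge> 0" "\<And>n. norm (matpow A n *v v) \<le> C * K ^ n"
    using matpow_vec_bound by blast
  have wb: "norm (matpow A (Suc n) *v v) \<le> (C * K) * K ^ n" for n
    using K(2)[of "Suc n"] by (simp add: algebra_simps)
  have nz: "1 / mittag_coeff \<alpha> (Suc n) \<noteq> 0" for n using mittag_coeff_pos[OF a, of "Suc n"] by simp
  show ?thesis
    by (rule summ_hyp[OF nz _ K(1) wb r]) (rule mittag_ratio[OF a])
qed

lemma NU:
  fixes A :: "complex^'d^'d" and \<delta> :: "'d \<Rightarrow> real"
  assumes a: "0 < \<alpha>" "\<alpha> < 1" and d: "\<And>k. \<delta> k > 0" and \<tau>: "\<tau> \<ge> 0"
  shows "(\<Sum>j. matpow A j *v (\<chi> k. l k * complex_of_real (Pco \<alpha> (\<delta> k) j * \<tau> powr (real j + 1 + \<delta> k))))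
       = (\<Sum>k\<in>UNIV. gser (Pco \<alpha> (\<delta> k)) (1 + \<delta> k) (\<lambda>j. matpow A j *v (\<chi> i. if i = k then l k else 0)) \<tau>)"
proof -
  let ?e = "\<lambda>k. (\<chi> i. if i = k then l k else 0)::complex^'d"
  have lin: "linear ((*v) (matpow A j))" for j
    using matrix_vector_mul_bounded_linear[of "matpow A j"] by (simp add: linear_conv_bounded_linear)
  have "matpow A j *v (\<chi> k. l k * complex_of_real (Pco \<alpha> (\<delta> k) j * \<tau> powr (real j + 1 + \<delta> k)))
      = (\<Sum>k\<in>UNIV. (Pco \<alpha> (\<delta> k) j * \<tau> powr (real j + (1 + \<delta> k))) *\<^sub>R (matpow A j *v ?e k))" for j
    unfolding vec_decomp by (simp add: linear_sum[OF lin] linear_scale[OF lin] add.assoc)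
  hence "(\<Sum>j. matpow A j *v (\<chi> k. l k * complex_of_real (Pco \<alpha> (\<delta> k) j * \<tau> powr (real j + 1 + \<delta> k))))
      = (\<Sum>j. \<Sum>k\<in>UNIV. (Pco \<alpha> (\<delta> k) j * \<tau> powr (real j + (1 + \<delta> k))) *\<^sub>R (matpow A j *v ?e k))"
    by simp
  also have "\<dots> = (\<Sum>k\<in>UNIV. \<Sum>j. (Pco \<alpha> (\<delta> k) j * \<tau> powr (real j + (1 + \<delta> k))) *\<^sub>R (matpow A j *v ?e k))"
  proof (rule suminf_sum)
    fix k
    have "summable (\<lambda>j. norm ((Pco \<alpha> (\<delta> k) j * \<tau> powr (real j + (1 + \<delta> k))) *\<^sub>R (matpow A j *v ?e k)))"
      by (rule summ_F[OF summ_k[OF a d] \<tau>])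
    thus "summable (\<lambda>j. (Pco \<alpha> (\<delta> k) j * \<tau> powr (real j + (1 + \<delta> k))) *\<^sub>R (matpow A j *v ?e k))"
      by (rule summable_norm_cancel)
  qed
  finally show ?thesis unfolding gser_def .
qed



lemma h1: "(G1::real) > 0 \<Longrightarrow> G2 > 0 \<Longrightarrow> G3 > 0 \<Longrightarrow> P * (G1 / (G2 * G3)) * (G2 * G3 / G1) = P"
  by (simp add: field_simps)

lemma h2: "(c::real) > 0 \<Longrightarrow> G1 > 0 \<Longrightarrow> G2 > 0 \<Longrightarrow> G3 > 0 \<Longrightarrow> 1 / (c * (G2 * (G3 / G1))) * (G2 * G3 / G1) * T = T / c"
  by (simp add: field_simps)

lemma mv_scaleR: "(M::complex^'d^'d) *v ((c::real) *\<^sub>R v) = c *\<^sub>R (M *v v)"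
  by (simp add: vec_eq_iff matrix_vector_mult_def scaleR_sum_right)

theorem mainTheorem13:
  fixes \<alpha> T :: real and A :: "complex^'d^'d" and x0 :: "complex^'d"
    and l :: "'d \<Rightarrow> complex" and \<delta> :: "'d \<Rightarrow> real"
    and \<nu> :: "nat \<Rightarrow> real \<Rightarrow> complex^'d" and x \<theta> :: "real \<Rightarrow> complex^'d"
  assumes "0 < \<alpha>" "\<alpha> < 1" "0 < T"
    and "\<forall>k. 0 < \<delta> k"
    and "\<theta> = (\<lambda>t. \<chi> k. l k * complex_of_real (t powr \<delta> k))"
    and "\<nu> = (\<lambda>j t. \<chi> k. l k * complex_of_real
            ((\<Prod>i=2..j+2. Gamma (real i - \<alpha> + \<delta> k)) /
             (Gamma (2 - \<alpha>) ^ (j + 1) * (\<Prod>i=2..j+2. Gamma (real i + \<delta> k)))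
             * t powr (real j + 1 + \<delta> k)))"
    and "x = (\<lambda>t. mittag_mat \<alpha> (t *\<^sub>R A) *v x0 + (\<Sum>j. matpow A j *v \<nu> j t))"
  shows "x 0 = x0 \<and>
    (\<forall>t\<in>{0<..T}.
       (\<forall>\<tau>\<in>{0<..<t}. x differentiable (at \<tau>)) \<and>
       (\<lambda>\<tau>. ((t - \<tau>) powr (- \<alpha>)) *\<^sub>R vector_derivative x (at \<tau>)) integrable_on {0..t} \<and>
       L_deriv \<alpha> x t = A *v x t + \<theta> t)"
proof -
  have a: "0 < \<alpha>" "\<alpha> < 1" using assms(1,2) .
  have d: "\<And>k. \<delta> k > 0" using assms(4) by auto
  define c where "c = mittag_coeff \<alpha>"
  define e where "e k = ((\<chi> i. if i = k then l k else 0)::complex^'d)" for k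
  define a0 where "a0 n = 1 / mittag_coeff \<alpha> (Suc n)" for n
  define w0 where "w0 n = matpow A (Suc n) *v x0" for n
  define G where "G k = gser (Pco \<alpha> (\<delta> k)) (1 + \<delta> k) (\<lambda>j. matpow A j *v e k)" for k
  define G' where "G' k = gser' (Pco \<alpha> (\<delta> k)) (1 + \<delta> k) (\<lambda>j. matpow A j *v e k)" for k
  define mit where "mit \<tau> = mittag_mat \<alpha> (\<tau> *\<^sub>R A) *v x0" for \<tau>
  have summ0: "\<And>r. r \<ge> 0 \<Longrightarrow> summable (\<lambda>n. \<bar>a0 n\<bar> * r ^ n * norm (w0 n))"
    unfolding a0_def w0_def by (rule summ_0[OF a])
  have summk: "\<And>r. r \<ge> 0 \<Longrightarrow> summable (\<lambda>j. \<bar>Pco \<alpha> (\<delta> k) j\<bar> * r ^ j * norm (matpow A j *v e k))" for k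
    by (rule summ_k[OF a d])
  have b0: "(1::real) > 0" by simp
  have bk: "1 + \<delta> k > 0" for k using d[of k] by simp
  have nu_eq: "\<nu> j \<tau> = (\<chi> k. l k * complex_of_real (Pco \<alpha> (\<delta> k) j * \<tau> powr (real j + 1 + \<delta> k)))" for j \<tau>
    unfolding assms(6) Pco_def by simp
  have xrep: "x \<tau> = mit \<tau> + (\<Sum>k\<in>UNIV. G k \<tau>)" if "\<tau> \<ge> 0" for \<tau>
  proof -
    have "(\<Sum>j. matpow A j *v \<nu> j \<tau>) = (\<Sum>k\<in>UNIV. G k \<tau>)"
      unfolding nu_eq G_def e_def by (rule NU[OF a d that])
    thus ?thesis by (simp add: assms(7) mit_def)
  qed
  have c0: "c 0 = 1" unfolding c_def by (rule mittag_coeff_0)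
  have MSt: "(\<lambda>n. (\<tau> ^ n / c n) *\<^sub>R (matpow A n *v x0)) sums mit \<tau>" for \<tau>
    unfolding c_def mit_def by (rule MS[OF a])
  have mit_pos: "mit \<tau> = x0 + gser a0 1 w0 \<tau>" if "\<tau> > 0" for \<tau>
  proof -
    have "(\<lambda>n. (\<tau> ^ n / c n) *\<^sub>R (matpow A n *v x0)) sums ((mit \<tau> - x0) + x0)"
      using MSt[of \<tau>] by simp
    hence "(\<lambda>n. (\<tau> ^ (Suc n) / c (Suc n)) *\<^sub>R (matpow A (Suc n) *v x0)) sums (mit \<tau> - x0)"
      by (subst sums_Suc_iff) (simp add: c0)
    moreover have "(\<tau> ^ (Suc n) / c (Suc n)) *\<^sub>R (matpow A (Suc n) *v x0) = (a0 n * \<tau> powr (real n + 1)) *\<^sub>R w0 n" for n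
    proof -
      have "\<tau> powr (real n + 1) = \<tau> ^ Suc n"
        using powr_realpow[OF that, of "Suc n"] by (simp add: add.commute)
      thus ?thesis unfolding a0_def w0_def c_def by simp
    qed
    ultimately have "(\<lambda>n. (a0 n * \<tau> powr (real n + 1)) *\<^sub>R w0 n) sums (mit \<tau> - x0)" by simp
    thus ?thesis unfolding gser_def by (simp add: sums_iff)
  qed
  have x0eq: "x 0 = x0"
  proof -
    have "(\<lambda>n. ((0::real) ^ n / c n) *\<^sub>R (matpow A n *v x0)) = (\<lambda>n. if n = 0 then x0 else 0)"
      by (rule ext) (simp add: c0)
    with MSt[of 0] have "(\<lambda>n. if n = 0 then x0 else 0) sums mit 0" by simp
    hence "mit 0 = x0" using sums_single[of 0 "\<lambda>_. x0"] sums_unique2 by blast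
    moreover have "G k 0 = 0" for k unfolding G_def gser_def by simp
    ultimately show ?thesis using xrep[of 0] by simp
  qed
  define D where "D \<tau> = gser' a0 1 w0 \<tau> + (\<Sum>k\<in>UNIV. G' k \<tau>)" for \<tau>
  have der: "(x has_vector_derivative D \<tau>) (at \<tau>)" if "\<tau> > 0" for \<tau>
  proof -
    have "((\<lambda>s. x0 + gser a0 1 w0 s + (\<Sum>k\<in>UNIV. G k s)) has_vector_derivative (0 + gser' a0 1 w0 \<tau> + (\<Sum>k\<in>UNIV. G' k \<tau>))) (at \<tau>)"
      unfolding G_def G'_def
      by (intro has_vector_derivative_add has_vector_derivative_const has_vector_derivative_sum
          gser_deriv[OF b0 summ0 that] gser_deriv[OF bk summk that])
    hence "((\<lambda>s. x0 + gser a0 1 w0 s + (\<Sum>k\<in>UNIV. G k s)) has_vector_derivative D \<tau>) (at \<tau>)"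
      by (simp add: D_def)
    thus ?thesis
    proof (rule has_vector_derivative_transform_within_open[of _ _ _ "{0<..}"])
      show "open {0::real<..}" by simp
      show "\<tau> \<in> {0<..}" using that by simp
      fix y :: real assume "y \<in> {0<..}"
      thus "x0 + gser a0 1 w0 y + (\<Sum>k\<in>UNIV. G k y) = x y"
        using xrep[of y] mit_pos[of y] by simp
    qed
  qed
  have main: "(\<forall>\<tau>\<in>{0<..<t}. x differentiable (at \<tau>)) \<and>
       (\<lambda>\<tau>. ((t - \<tau>) powr (- \<alpha>)) *\<^sub>R vector_derivative x (at \<tau>)) integrable_on {0..t} \<and>
       L_deriv \<alpha> x t = A *v x t + \<theta> t" if t: "t > 0" for t
  proof -
    define Cst where "Cst = Gamma (2 - \<alpha>) / t powr (1 - \<alpha>) * (1 / Gamma (1 - \<alpha>))"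
    obtain I0 where I0: "((\<lambda>\<tau>. (t - \<tau>) powr (- \<alpha>) *\<^sub>R gser' a0 1 w0 \<tau>) has_integral I0) {0..t}"
      "(\<lambda>n. (a0 n * (real n + 1) * Beta (real n + 1) (1 - \<alpha>) * t powr (real n + 1 - \<alpha>)) *\<^sub>R w0 n) sums I0"
      using gser_integral[OF b0 summ0 t a] by blast
    have ex: "\<forall>k. \<exists>I. ((\<lambda>\<tau>. (t - \<tau>) powr (- \<alpha>) *\<^sub>R G' k \<tau>) has_integral I) {0..t} \<and>
      (\<lambda>j. (Pco \<alpha> (\<delta> k) j * (real j + (1 + \<delta> k)) * Beta (real j + (1 + \<delta> k)) (1 - \<alpha>) * t powr (real j + (1 + \<delta> k) - \<alpha>)) *\<^sub>R (matpow A j *v e k)) sums I"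
      unfolding G'_def using gser_integral[OF bk summk t a] by blast
    obtain Ik where Ik0: "\<forall>k. ((\<lambda>\<tau>. (t - \<tau>) powr (- \<alpha>) *\<^sub>R G' k \<tau>) has_integral Ik k) {0..t}
      \<and> (\<lambda>j. (Pco \<alpha> (\<delta> k) j * (real j + (1 + \<delta> k)) * Beta (real j + (1 + \<delta> k)) (1 - \<alpha>) * t powr (real j + (1 + \<delta> k) - \<alpha>)) *\<^sub>R (matpow A j *v e k)) sums Ik k"
      using choice[OF ex] by blast
    have Ik: "\<And>k. ((\<lambda>\<tau>. (t - \<tau>) powr (- \<alpha>) *\<^sub>R G' k \<tau>) has_integral Ik k) {0..t}"
      "\<And>k. (\<lambda>j. (Pco \<alpha> (\<delta> k) j * (real j + (1 + \<delta> k)) * Beta (real j + (1 + \<delta> k)) (1 - \<alpha>) * t powr (real j + (1 + \<delta> k) - \<alpha>)) *\<^sub>R (matpow A j *v e k)) sums Ik k"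
      using Ik0 by blast+
    have HI: "((\<lambda>\<tau>. (t - \<tau>) powr (- \<alpha>) *\<^sub>R D \<tau>) has_integral (I0 + (\<Sum>k\<in>UNIV. Ik k))) {0..t}"
      unfolding D_def scaleR_add_right scaleR_sum_right
      by (intro has_integral_add has_integral_sum I0(1) Ik(1)) auto
    have HX: "((\<lambda>\<tau>. (t - \<tau>) powr (- \<alpha>) *\<^sub>R vector_derivative x (at \<tau>)) has_integral (I0 + (\<Sum>k\<in>UNIV. Ik k))) {0..t}"
    proof (rule has_integral_spike_finite[of "{0, t}", OF _ _ HI])
      fix \<tau> assume "\<tau> \<in> {0..t} - {0, t}"
      hence "\<tau> > 0" by auto
      thus "(t - \<tau>) powr (- \<alpha>) *\<^sub>R vector_derivative x (at \<tau>) = (t - \<tau>) powr (- \<alpha>) *\<^sub>R D \<tau>"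
        using vector_derivative_at[OF der] by simp
    qed simp
    have diff: "\<forall>\<tau>\<in>{0<..<t}. x differentiable (at \<tau>)"
    proof
      fix \<tau> :: real assume "\<tau> \<in> {0<..<t}"
      hence "\<tau> > 0" by simp
      thus "x differentiable (at \<tau>)"
        using der[of \<tau>] unfolding differentiable_def has_vector_derivative_def by blast
    qed
    have Lval: "L_deriv \<alpha> x t = Cst *\<^sub>R (I0 + (\<Sum>k\<in>UNIV. Ik k))"
      unfolding L_deriv_def caputo_def integral_unique[OF HX] Cst_def by simp
    have L0: "(\<lambda>n. (a0 n * (Gamma (2 - \<alpha>) * Gamma (real n + 1 + 1) / Gamma (real n + 1 + 1 - \<alpha>)) * t powr (real n + 1 - 1)) *\<^sub>R w0 n)
      sums (Cst *\<^sub>R I0)"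
      unfolding Cst_def by (rule gser_L[OF b0 t a I0(2)])
    have L0c: "a0 n * (Gamma (2 - \<alpha>) * Gamma (real n + 1 + 1) / Gamma (real n + 1 + 1 - \<alpha>)) * t powr (real n + 1 - 1) = t ^ n / c n" for n
    proof -
      have "Gamma (2 - \<alpha>) > 0" "Gamma (real n + 2) > 0" "Gamma (real n + 2 - \<alpha>) > 0"
        using a by (auto intro!: Gamma_real_pos)
      moreover have "c n > 0" unfolding c_def using mittag_coeff_pos[OF a] .
      moreover have "real n + 1 + 1 = real n + 2" "real n + 1 + 1 - \<alpha> = real n + 2 - \<alpha>" "real n + 1 - 1 = real n" by simp_all
      moreover have "t powr real n = t ^ n" using powr_realpow[OF t] .
      moreover have "c (Suc n) = c n * (Gamma (2 - \<alpha>) * (Gamma (real n + 2) / Gamma (real n + 2 - \<alpha>)))"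
        unfolding c_def by (rule mittag_coeff_Suc)
      ultimately show ?thesis unfolding a0_def c_def[symmetric]
        by (simp only:) (rule h2)
    qed
    have "(\<lambda>n. A *v ((t ^ n / c n) *\<^sub>R (matpow A n *v x0))) sums (Cst *\<^sub>R I0)"
    proof -
      have "(t ^ n / c n) *\<^sub>R w0 n = A *v ((t ^ n / c n) *\<^sub>R (matpow A n *v x0))" for n
        unfolding w0_def matpow_Suc_vec mv_scaleR ..
      note E = this
      show ?thesis using L0 unfolding L0c E .
    qed
    moreover have "(\<lambda>n. A *v ((t ^ n / c n) *\<^sub>R (matpow A n *v x0))) sums (A *v mit t)"
      by (rule bounded_linear.sums[OF matrix_vector_mul_bounded_linear MSt])
    ultimately have C0: "Cst *\<^sub>R I0 = A *v mit t" by (rule sums_unique2)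
    have Ck: "Cst *\<^sub>R Ik k = A *v G k t + t powr \<delta> k *\<^sub>R e k" for k
    proof -
      define f where "f j = (Pco \<alpha> (\<delta> k) j * (Gamma (2 - \<alpha>) * Gamma (real j + (1 + \<delta> k) + 1) / Gamma (real j + (1 + \<delta> k) + 1 - \<alpha>)) * t powr (real j + (1 + \<delta> k) - 1)) *\<^sub>R (matpow A j *v e k)" for j
      have Lk: "f sums (Cst *\<^sub>R Ik k)"
        unfolding Cst_def f_def by (rule gser_L[OF bk t a Ik(2)])
      have g: "Gamma (2 - \<alpha>) > 0" "Gamma (2 + \<delta> k) > 0" "Gamma (2 - \<alpha> + \<delta> k) > 0"
        "\<And>j. Gamma (real j + 3 + \<delta> k) > 0" "\<And>j. Gamma (real j + 3 - \<alpha> + \<delta> k) > 0"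
        using a d[of k] by (auto intro!: Gamma_real_pos)
      have f0: "f 0 = t powr \<delta> k *\<^sub>R e k"
      proof -
        have "real 0 + (1 + \<delta> k) + 1 = 2 + \<delta> k" "real 0 + (1 + \<delta> k) + 1 - \<alpha> = 2 - \<alpha> + \<delta> k"
          "real 0 + (1 + \<delta> k) - 1 = \<delta> k" by simp_all
        thus ?thesis unfolding f_def Pco_0 using g by (simp add: field_simps)
      qed
      have fS: "f (Suc j) = A *v ((Pco \<alpha> (\<delta> k) j * t powr (real j + (1 + \<delta> k))) *\<^sub>R (matpow A j *v e k))" for j
      proof -
        have "real (Suc j) + (1 + \<delta> k) + 1 = real j + 3 + \<delta> k" "real (Suc j) + (1 + \<delta> k) + 1 - \<alpha> = real j + 3 - \<alpha> + \<delta> k"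
          "real (Suc j) + (1 + \<delta> k) - 1 = real j + (1 + \<delta> k)" by simp_all
        moreover have "Pco \<alpha> (\<delta> k) (Suc j) * (Gamma (2 - \<alpha>) * Gamma (real j + 3 + \<delta> k) / Gamma (real j + 3 - \<alpha> + \<delta> k)) = Pco \<alpha> (\<delta> k) j"
          unfolding Pco_Suc using g by (intro h1)
        ultimately show ?thesis unfolding f_def matpow_Suc_vec mv_scaleR by (simp only:)
      qed
      have "(\<lambda>j. f (Suc j)) sums (Cst *\<^sub>R Ik k - f 0)"
        using Lk by (subst sums_Suc_iff) simp
      hence S1: "(\<lambda>j. A *v ((Pco \<alpha> (\<delta> k) j * t powr (real j + (1 + \<delta> k))) *\<^sub>R (matpow A j *v e k))) sums (Cst *\<^sub>R Ik k - f 0)"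
        unfolding fS .
      have "summable (\<lambda>j. norm ((Pco \<alpha> (\<delta> k) j * t powr (real j + (1 + \<delta> k))) *\<^sub>R (matpow A j *v e k)))"
        by (rule summ_F[OF summk less_imp_le[OF t]])
      hence "(\<lambda>j. (Pco \<alpha> (\<delta> k) j * t powr (real j + (1 + \<delta> k))) *\<^sub>R (matpow A j *v e k)) sums G k t"
        unfolding G_def gser_def by (rule summable_sums[OF summable_norm_cancel])
      from bounded_linear.sums[OF matrix_vector_mul_bounded_linear this]
      have S2: "(\<lambda>j. A *v ((Pco \<alpha> (\<delta> k) j * t powr (real j + (1 + \<delta> k))) *\<^sub>R (matpow A j *v e k))) sums (A *v G k t)" .
      from sums_unique2[OF S1 S2] f0 show ?thesis by (simp add: algebra_simps)
    qed
    have th: "\<theta> t = (\<Sum>k\<in>UNIV. t powr \<delta> k *\<^sub>R e k)"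
      unfolding assms(5) e_def by (rule vec_decomp)
    have lin: "linear ((*v) A)"
      using matrix_vector_mul_bounded_linear[of A] by (simp add: linear_conv_bounded_linear)
    have "L_deriv \<alpha> x t = Cst *\<^sub>R I0 + (\<Sum>k\<in>UNIV. Cst *\<^sub>R Ik k)"
      unfolding Lval by (simp add: scaleR_add_right scaleR_sum_right)
    also have "\<dots> = A *v mit t + (\<Sum>k\<in>UNIV. A *v G k t) + (\<Sum>k\<in>UNIV. t powr \<delta> k *\<^sub>R e k)"
      unfolding C0 Ck by (simp add: sum.distrib add.assoc)
    also have "\<dots> = A *v x t + \<theta> t"
      unfolding xrep[OF less_imp_le[OF t]] th
      by (simp add: matrix_vector_right_distrib linear_sum[OF lin])
    finally have "L_deriv \<alpha> x t = A *v x t + \<theta> t" .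
    with diff HX show ?thesis by blast
  qed
  have "\<forall>t\<in>{0<..T}. (\<forall>\<tau>\<in>{0<..<t}. x differentiable (at \<tau>)) \<and>
       (\<lambda>\<tau>. ((t - \<tau>) powr (- \<alpha>)) *\<^sub>R vector_derivative x (at \<tau>)) integrable_on {0..t} \<and>
       L_deriv \<alpha> x t = A *v x t + \<theta> t"
  proof
    fix t assume "t \<in> {0<..T}"
    hence "t > 0" by simp
    thus "(\<forall>\<tau>\<in>{0<..<t}. x differentiable (at \<tau>)) \<and>
       (\<lambda>\<tau>. ((t - \<tau>) powr (- \<alpha>)) *\<^sub>R vector_derivative x (at \<tau>)) integrable_on {0..t} \<and>
       L_deriv \<alpha> x t = A *v x t + \<theta> t" by (rule main)
  qed
  with x0eq show ?thesis by blast
qed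


end
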